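(* Let $G$ be an almost simple primitive permutation group on $\Omega$ with a normal subgroup $G_0$, and let $\omega\in\Omega$. If $K$ is a fixer of $G$ with $|K|\geqslant|G_\omega|$, then $K_0:=K\cap G_0$ is a fixer of $G_0$ (acting on $\Omega$) with $|K_0|\geqslant|(G_0)_\omega|$.
   Context: A subgroup $K$ of a permutation group $G\leqslant\mathrm{Sym}(\Omega)$ is a fixer if every element of $K$ fixes at least one point of $\Omega$. *)

theory Defs
  imports "HOL-Algebra.Algebra"
begin

definition perm_grp :: "'a set \<Rightarrow> ('a \<Rightarrow> 'a) set \<Rightarrow> ('a \<Rightarrow> 'a) monoid" where
  "perm_grp \<Omega> G = (BijGroup \<Omega>)\<lparr>carrier := G\<rparr>"

definition perm_group :: "'a set \<Rightarrow> ('a \<Rightarrow> 'a) set \<Rightarrow> bool" where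
  "perm_group \<Omega> G \<longleftrightarrow> subgroup G (BijGroup \<Omega>)"

definition stabiliser :: "('a \<Rightarrow> 'a) set \<Rightarrow> 'a \<Rightarrow> ('a \<Rightarrow> 'a) set" where
  "stabiliser G \<omega> = {g \<in> G. g \<omega> = \<omega>}"

definition transitive_on :: "'a set \<Rightarrow> ('a \<Rightarrow> 'a) set \<Rightarrow> bool" where
  "transitive_on \<Omega> G \<longleftrightarrow> (\<forall>x\<in>\<Omega>. \<forall>y\<in>\<Omega>. \<exists>g\<in>G. g x = y)"

definition is_block :: "'a set \<Rightarrow> ('a \<Rightarrow> 'a) set \<Rightarrow> 'a set \<Rightarrow> bool" where
  "is_block \<Omega> G B \<longleftrightarrow> B \<subseteq> \<Omega> \<and> B \<noteq> {} \<and>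
     (\<forall>g\<in>G. g ` B = B \<or> g ` B \<inter> B = {})"

definition primitive :: "'a set \<Rightarrow> ('a \<Rightarrow> 'a) set \<Rightarrow> bool" where
  "primitive \<Omega> G \<longleftrightarrow> perm_group \<Omega> G \<and> transitive_on \<Omega> G \<and>
     (\<forall>B. is_block \<Omega> G B \<longrightarrow> card B = 1 \<or> B = \<Omega>)"

text \<open>Almost simple: T \<le> G \<le> Aut(T) for a nonabelian simple group T, i.e. G has a
  nonabelian simple normal subgroup T with trivial centraliser in G.\<close>
definition almost_simple :: "('a \<Rightarrow> 'a) monoid \<Rightarrow> bool" where
  "almost_simple H \<longleftrightarrow> group H \<and> (\<exists>T. T \<lhd> H \<and> simple_group (H\<lparr>carrier := T\<rparr>) \<and>
     \<not> comm_group (H\<lparr>carrier := T\<rparr>) \<and>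
     {g \<in> carrier H. \<forall>t\<in>T. g \<otimes>\<^bsub>H\<^esub> t = t \<otimes>\<^bsub>H\<^esub> g} = {\<one>\<^bsub>H\<^esub>})"

definition fixer :: "'a set \<Rightarrow> ('a \<Rightarrow> 'a) set \<Rightarrow> ('a \<Rightarrow> 'a) set \<Rightarrow> bool" where
  "fixer \<Omega> G K \<longleftrightarrow> subgroup K (perm_grp \<Omega> G) \<and> (\<forall>k\<in>K. \<exists>x\<in>\<Omega>. k x = x)"

end

theory Submission
  imports Defs "HOL-Algebra.Group_Action" "HOL-Algebra.SndIsomorphismGrp"
begin

lemma finite_Bij: "finite S \<Longrightarrow> finite (Bij S)"
proof -
  assume "finite S"
  have "Bij S \<subseteq> PiE S (\<lambda>_. S)"
    by (auto simp: Bij_def bij_betw_def PiE_def)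
  moreover have "finite (PiE S (\<lambda>_. S))" using \<open>finite S\<close> by (simp add: finite_PiE)
  ultimately show ?thesis by (rule finite_subset)
qed

lemma perm_grp_simps [simp]:
  "carrier (perm_grp \<Omega> G) = G"
  by (simp_all add: perm_grp_def)

lemma perm_grp_ops:
  "monoid.mult (perm_grp \<Omega> G) = monoid.mult (BijGroup \<Omega>)"
  "monoid.one (perm_grp \<Omega> G) = monoid.one (BijGroup \<Omega>)"
  by (simp_all add: perm_grp_def)

lemma perm_grp_app:
  assumes "G \<subseteq> Bij \<Omega>" "a \<in> G" "b \<in> G" "x \<in> \<Omega>"
  shows "(a \<otimes>\<^bsub>perm_grp \<Omega> G\<^esub> b) x = a (b x)"
  using assms by (auto simp: perm_grp_def BijGroup_def compose_def)

lemma perm_grp_one_app: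
  "x \<in> \<Omega> \<Longrightarrow> (\<one>\<^bsub>perm_grp \<Omega> G\<^esub>) x = x"
  by (simp add: perm_grp_def BijGroup_def)

lemma Bij_mem: "g \<in> Bij \<Omega> \<Longrightarrow> x \<in> \<Omega> \<Longrightarrow> g x \<in> \<Omega>"
  by (auto simp: Bij_def bij_betw_def)

theorem lemma2p5:
  fixes \<Omega> :: "'a set" and G G0 K :: "('a \<Rightarrow> 'a) set" and \<omega> :: 'a
  assumes "finite \<Omega>"
    and "perm_group \<Omega> G"
    and "primitive \<Omega> G"
    and "almost_simple (perm_grp \<Omega> G)"
    and "G0 \<lhd> perm_grp \<Omega> G"
    and "\<omega> \<in> \<Omega>"
    and "fixer \<Omega> G K"
    and "card K \<ge> card (stabiliser G \<omega>)"
  shows "fixer \<Omega> G0 (K \<inter> G0) \<and> card (K \<inter> G0) \<ge> card (stabiliser G0 \<omega>)"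
proof -
  let ?Gp = "perm_grp \<Omega> G"
  have sgG: "subgroup G (BijGroup \<Omega>)" using assms(2) by (simp add: perm_group_def)
  have GB: "G \<subseteq> Bij \<Omega>" using subgroup.subset[OF sgG] by (simp add: BijGroup_def)
  have grpGp: "group ?Gp" unfolding perm_grp_def
    using group.subgroup_imp_group[OF group_BijGroup sgG] .
  interpret Gp: group ?Gp by (rule grpGp)
  have nG0: "G0 \<lhd> ?Gp" by fact
  have sgG0: "subgroup G0 ?Gp" using nG0 by (simp add: normal_def)
  have G0G: "G0 \<subseteq> G" using subgroup.subset[OF sgG0] by simp
  have sgK: "subgroup K ?Gp" using assms(7) by (simp add: fixer_def)
  have KG: "K \<subseteq> G" using subgroup.subset[OF sgK] by simp
  have finG: "finite G" using finite_subset[OF GB finite_Bij[OF assms(1)]] .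
  have conj: "x \<otimes>\<^bsub>?Gp\<^esub> h \<otimes>\<^bsub>?Gp\<^esub> inv\<^bsub>?Gp\<^esub> x \<in> G0" if "x \<in> G" "h \<in> G0" for x h
    using nG0 that unfolding Gp.normal_inv_iff by (simp only: perm_grp_simps)
  have invG: "inv\<^bsub>?Gp\<^esub> a \<in> G" if "a \<in> G" for a using Gp.inv_closed[of a] that by simp
  have app: "(a \<otimes>\<^bsub>?Gp\<^esub> b) x = a (b x)" if "a \<in> G" "b \<in> G" "x \<in> \<Omega>" for a b x
    using perm_grp_app[OF GB that] .
  have invapp: "(inv\<^bsub>?Gp\<^esub> a) (a x) = x" "a ((inv\<^bsub>?Gp\<^esub> a) x) = x"
    if "a \<in> G" "x \<in> \<Omega>" for a x
  proof -
    have ia: "inv\<^bsub>?Gp\<^esub> a \<in> G" using Gp.inv_closed[of a] that by simp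
    have "(inv\<^bsub>?Gp\<^esub> a) (a x) = (inv\<^bsub>?Gp\<^esub> a \<otimes>\<^bsub>?Gp\<^esub> a) x"
      by (rule app[OF ia that, symmetric])
    also have "\<dots> = (\<one>\<^bsub>?Gp\<^esub>) x" using Gp.l_inv[of a] that(1) by simp
    also have "\<dots> = x" by (rule perm_grp_one_app[OF that(2)])
    finally show "(inv\<^bsub>?Gp\<^esub> a) (a x) = x" .
    have "a ((inv\<^bsub>?Gp\<^esub> a) x) = (a \<otimes>\<^bsub>?Gp\<^esub> inv\<^bsub>?Gp\<^esub> a) x"
      by (rule app[OF that(1) ia that(2), symmetric])
    also have "\<dots> = (\<one>\<^bsub>?Gp\<^esub>) x" using Gp.r_inv[of a] that(1) by simp
    also have "\<dots> = x" by (rule perm_grp_one_app[OF that(2)])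
    finally show "a ((inv\<^bsub>?Gp\<^esub> a) x) = x" .
  qed
  have mcl: "a \<otimes>\<^bsub>?Gp\<^esub> b \<in> G" if "a \<in> G" "b \<in> G" for a b
    using Gp.m_closed[of a b] that by simp
  have mem: "g x \<in> \<Omega>" if "g \<in> G" "x \<in> \<Omega>" for g x by (rule Bij_mem[OF subsetD[OF GB that(1)] that(2)])
  define orb where "orb x = {h x | h. h \<in> G0}" for x
  have orbsub: "orb x \<subseteq> \<Omega>" if "x \<in> \<Omega>" for x using that mem G0G by (auto simp: orb_def)
  have L1: "g ` orb x = orb (g x)" if "g \<in> G" "x \<in> \<Omega>" for g x
  proof
    show "g ` orb x \<subseteq> orb (g x)"
    proof
      fix y assume "y \<in> g ` orb x"
      then obtain h where h: "h \<in> G0" "y = g (h x)" by (auto simp: orb_def)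
      have hG: "h \<in> G" using h G0G by auto
      have ig: "inv\<^bsub>?Gp\<^esub> g \<in> G" using invG that by blast
      have "(g \<otimes>\<^bsub>?Gp\<^esub> h \<otimes>\<^bsub>?Gp\<^esub> inv\<^bsub>?Gp\<^esub> g) (g x)
           = (g \<otimes>\<^bsub>?Gp\<^esub> h) ((inv\<^bsub>?Gp\<^esub> g) (g x))"
        by (rule app[OF mcl[OF that(1) hG] ig mem[OF that]])
      also have "\<dots> = (g \<otimes>\<^bsub>?Gp\<^esub> h) x" using invapp(1)[OF that] by simp
      also have "\<dots> = g (h x)" by (rule app[OF that(1) hG that(2)])
      finally have "(g \<otimes>\<^bsub>?Gp\<^esub> h \<otimes>\<^bsub>?Gp\<^esub> inv\<^bsub>?Gp\<^esub> g) (g x) = g (h x)" .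
      then show "y \<in> orb (g x)" unfolding orb_def h(2)
        using conj[OF that(1) h(1)] by (intro CollectI exI conjI[rotated]) (assumption, rule sym)
    qed
    show "orb (g x) \<subseteq> g ` orb x"
    proof
      fix y assume "y \<in> orb (g x)"
      then obtain h where h: "h \<in> G0" "y = h (g x)" by (auto simp: orb_def)
      have hG: "h \<in> G" using h G0G by auto
      have ig: "inv\<^bsub>?Gp\<^esub> g \<in> G" using invG that by blast
      have c: "inv\<^bsub>?Gp\<^esub> g \<otimes>\<^bsub>?Gp\<^esub> h \<otimes>\<^bsub>?Gp\<^esub> inv\<^bsub>?Gp\<^esub> (inv\<^bsub>?Gp\<^esub> g) \<in> G0"
        using conj[OF ig h(1)] .
      hence c': "inv\<^bsub>?Gp\<^esub> g \<otimes>\<^bsub>?Gp\<^esub> h \<otimes>\<^bsub>?Gp\<^esub> g \<in> G0"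
        using Gp.inv_inv[of g] that by simp
      have "(inv\<^bsub>?Gp\<^esub> g \<otimes>\<^bsub>?Gp\<^esub> h \<otimes>\<^bsub>?Gp\<^esub> g) x
           = (inv\<^bsub>?Gp\<^esub> g) (h (g x))"
        using app[OF mcl[OF ig hG] that] app[OF ig hG mem[OF that]] by simp
      hence "g ((inv\<^bsub>?Gp\<^esub> g \<otimes>\<^bsub>?Gp\<^esub> h \<otimes>\<^bsub>?Gp\<^esub> g) x) = h (g x)"
        using invapp(2)[OF that(1) mem[OF hG mem[OF that]]] by simp
      moreover have "(inv\<^bsub>?Gp\<^esub> g \<otimes>\<^bsub>?Gp\<^esub> h \<otimes>\<^bsub>?Gp\<^esub> g) x \<in> orb x"
        unfolding orb_def using c' by blast
      ultimately show "y \<in> g ` orb x" using h(2) by (metis image_eqI)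
    qed
  qed
  have L2: "orb y = orb x" if yx: "y \<in> orb x" and xO: "x \<in> \<Omega>" for x y
  proof -
    obtain h0 where h0: "h0 \<in> G0" "y = h0 x" using yx unfolding orb_def by blast
    have h0G: "h0 \<in> G" using h0 G0G by auto
    show ?thesis
    proof
      show "orb y \<subseteq> orb x"
      proof
        fix z assume "z \<in> orb y"
        then obtain h where h: "h \<in> G0" "z = h y" by (auto simp: orb_def)
        have hG: "h \<in> G" using h G0G by blast
        have "(h \<otimes>\<^bsub>?Gp\<^esub> h0) x = h (h0 x)" using app[OF hG h0G xO] .
        hence "(h \<otimes>\<^bsub>?Gp\<^esub> h0) x = z" using h h0 by simp
        moreover have "h \<otimes>\<^bsub>?Gp\<^esub> h0 \<in> G0" using h h0 subgroup.m_closed[OF sgG0] by auto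
        ultimately show "z \<in> orb x" unfolding orb_def by blast
      qed
      show "orb x \<subseteq> orb y"
      proof
        fix z assume "z \<in> orb x"
        then obtain h where h: "h \<in> G0" "z = h x" by (auto simp: orb_def)
        have hG: "h \<in> G" using h G0G by blast
        have ih: "inv\<^bsub>?Gp\<^esub> h0 \<in> G" using invG h0G by blast
        have "(h \<otimes>\<^bsub>?Gp\<^esub> inv\<^bsub>?Gp\<^esub> h0) y = h ((inv\<^bsub>?Gp\<^esub> h0) (h0 x))"
          using app[OF hG ih] h0 mem[OF h0G xO] by simp
        hence "(h \<otimes>\<^bsub>?Gp\<^esub> inv\<^bsub>?Gp\<^esub> h0) y = z" using h invapp(1)[OF h0G xO] by simp
        moreover have "h \<otimes>\<^bsub>?Gp\<^esub> inv\<^bsub>?Gp\<^esub> h0 \<in> G0"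
          using h h0 subgroup.m_closed[OF sgG0] subgroup.m_inv_closed[OF sgG0] by auto
        ultimately show "z \<in> orb y" unfolding orb_def by blast
      qed
    qed
  qed
  have oneG0: "\<one>\<^bsub>?Gp\<^esub> \<in> G0" using subgroup.one_closed[OF sgG0] .
  have \<omega>orb: "\<omega> \<in> orb \<omega>" using oneG0 assms(6) perm_grp_one_app[of \<omega> \<Omega> G]
    unfolding orb_def by (metis (mono_tags, lifting) mem_Collect_eq)
  have block: "is_block \<Omega> G (orb \<omega>)"
    unfolding is_block_def
  proof (intro conjI ballI)
    show "orb \<omega> \<subseteq> \<Omega>" using orbsub assms(6) by blast
    show "orb \<omega> \<noteq> {}" using \<omega>orb by blast
    fix g assume g: "g \<in> G"
    show "g ` orb \<omega> = orb \<omega> \<or> g ` orb \<omega> \<inter> orb \<omega> = {}"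
    proof (cases "g ` orb \<omega> \<inter> orb \<omega> = {}")
      case False
      then obtain z where z: "z \<in> orb (g \<omega>)" "z \<in> orb \<omega>" using L1[OF g assms(6)] by auto
      have "orb (g \<omega>) = orb z" using L2[OF z(1)] mem[OF g assms(6)] by simp
      also have "\<dots> = orb \<omega>" using L2[OF z(2) assms(6)] .
      finally show ?thesis using L1[OF g assms(6)] by simp
    qed simp
  qed
  have trG: "transitive_on \<Omega> G" using assms(3) by (simp add: primitive_def)
  have cases: "card (orb \<omega>) = 1 \<or> orb \<omega> = \<Omega>"
    using assms(3) block by (simp add: primitive_def)
  have fix0: "fixer \<Omega> G0 (K \<inter> G0)"
  proof -
    have "subgroup (K \<inter> G0) ?Gp" using Gp.subgroups_Inter_pair[OF sgK sgG0] .
    hence "subgroup (K \<inter> G0) (?Gp\<lparr>carrier := G0\<rparr>)"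
      using Gp.subgroup_incl[OF _ sgG0] by blast
    moreover have "?Gp\<lparr>carrier := G0\<rparr> = perm_grp \<Omega> G0" by (simp add: perm_grp_def)
    ultimately show ?thesis using assms(7) by (auto simp: fixer_def)
  qed
  show ?thesis
  proof (cases "orb \<omega> = \<Omega>")
    case False
    hence "card (orb \<omega>) = 1" using cases by simp
    then obtain a where "orb \<omega> = {a}" by (meson card_1_singletonE)
    note single = this
    have fixw: "h \<omega> = \<omega>" if "h \<in> G0" for h
    proof -
      have "h \<omega> \<in> orb \<omega>" using that unfolding orb_def by blast
      then show ?thesis using single \<omega>orb by simp
    qed
    have triv: "h = \<one>\<^bsub>?Gp\<^esub>" if h: "h \<in> G0" for h
    proof
      fix x
      show "h x = (\<one>\<^bsub>?Gp\<^esub>) x"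
      proof (cases "x \<in> \<Omega>")
        case True
        then obtain g where g: "g \<in> G" "g \<omega> = x" using trG assms(6) by (auto simp: transitive_on_def)
        have ig: "inv\<^bsub>?Gp\<^esub> g \<in> G" using invG g by blast
        have "inv\<^bsub>?Gp\<^esub> g \<otimes>\<^bsub>?Gp\<^esub> h \<otimes>\<^bsub>?Gp\<^esub> inv\<^bsub>?Gp\<^esub> (inv\<^bsub>?Gp\<^esub> g) \<in> G0"
          using conj[OF ig h] .
        hence c': "inv\<^bsub>?Gp\<^esub> g \<otimes>\<^bsub>?Gp\<^esub> h \<otimes>\<^bsub>?Gp\<^esub> g \<in> G0"
          using Gp.inv_inv[of g] g(1) by simp
        have hG: "h \<in> G" using h G0G by auto
        have gw: "g \<in> G" "\<omega> \<in> \<Omega>" using g(1) assms(6) by auto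
        have "(inv\<^bsub>?Gp\<^esub> g \<otimes>\<^bsub>?Gp\<^esub> h \<otimes>\<^bsub>?Gp\<^esub> g) \<omega>
           = (inv\<^bsub>?Gp\<^esub> g) (h (g \<omega>))"
          using app[OF mcl[OF ig hG] gw] app[OF ig hG mem[OF gw]] by simp
        hence "g ((inv\<^bsub>?Gp\<^esub> g \<otimes>\<^bsub>?Gp\<^esub> h \<otimes>\<^bsub>?Gp\<^esub> g) \<omega>) = h (g \<omega>)"
          using invapp(2)[OF gw(1) mem[OF hG mem[OF gw]]] by simp
        hence "g \<omega> = h (g \<omega>)" by (simp only: fixw[OF c'])
        note eq = this
        have "h x = h (g \<omega>)" by (simp only: g(2))
        also have "\<dots> = g \<omega>" by (rule eq[symmetric])
        also have "\<dots> = x" by (rule g(2))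
        finally have "h x = x" .
        then show ?thesis using perm_grp_one_app[OF True, of G] by simp
      next
        case False
        have "h \<in> Bij \<Omega>" using h G0G GB by auto
        hence "h x = undefined" using False by (auto simp: Bij_def extensional_def)
        then show ?thesis using False by (simp add: perm_grp_def BijGroup_def)
      qed
    qed
    hence G0one: "G0 = {\<one>\<^bsub>?Gp\<^esub>}" using oneG0 by blast
    have oneK: "\<one>\<^bsub>?Gp\<^esub> \<in> K" using subgroup.one_closed[OF sgK] .
    have "K \<inter> G0 = {\<one>\<^bsub>?Gp\<^esub>}" using G0one oneK by auto
    moreover have "stabiliser G0 \<omega> \<subseteq> G0" by (auto simp: stabiliser_def)
    ultimately have "card (stabiliser G0 \<omega>) \<le> card (K \<inter> G0)"
      using G0one card_mono[of "{\<one>\<^bsub>?Gp\<^esub>}" "stabiliser G0 \<omega>"] by simp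
    then show ?thesis using fix0 by simp
  next
    case True
    have os: "card \<Omega> * card (stabiliser H \<omega>) = card H"
      if sgH: "subgroup H ?Gp" and trH: "\<forall>x\<in>\<Omega>. \<exists>h\<in>H. h \<omega> = x" for H
    proof -
      have HG: "H \<subseteq> G" using subgroup.subset[OF sgH] by simp
      have grpH: "group (perm_grp \<Omega> H)"
        using Gp.subgroup_imp_group[OF sgH] by (simp add: perm_grp_def)
      have HB: "H \<subseteq> Bij \<Omega>" using HG GB by auto
      have hom: "group_hom (perm_grp \<Omega> H) (BijGroup \<Omega>) id"
      proof (rule group_hom.intro[OF grpH group_BijGroup], unfold_locales)
        show "id \<in> hom (perm_grp \<Omega> H) (BijGroup \<Omega>)"
          using HB by (auto simp: hom_def perm_grp_def BijGroup_def)
      qed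
      interpret A: group_action "perm_grp \<Omega> H" \<Omega> id
        using hom by (simp add: group_action_def)
      have "orbit (perm_grp \<Omega> H) id \<omega> = \<Omega>"
      proof
        show "orbit (perm_grp \<Omega> H) id \<omega> \<subseteq> \<Omega>"
        proof
          fix y assume "y \<in> orbit (perm_grp \<Omega> H) id \<omega>"
          then obtain g where g: "g \<in> H" "y = g \<omega>" by (auto simp: orbit_def)
          show "y \<in> \<Omega>" using Bij_mem[OF subsetD[OF HB g(1)] assms(6)] g(2) by simp
        qed
        show "\<Omega> \<subseteq> orbit (perm_grp \<Omega> H) id \<omega>"
          using trH by (force simp: orbit_def)
      qed
      moreover have "stabilizer (perm_grp \<Omega> H) id \<omega> = stabiliser H \<omega>"
        by (simp add: stabilizer_def stabiliser_def)
      ultimately show ?thesis using A.orbit_stabilizer_theorem[OF assms(6)]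
        by (simp add: order_def)
    qed
    have osG: "card \<Omega> * card (stabiliser G \<omega>) = card G"
      using os[of G] trG assms(6) Gp.subgroup_self by (auto simp: transitive_on_def)
    have osG0: "card \<Omega> * card (stabiliser G0 \<omega>) = card G0"
      using os[OF sgG0] True by (auto simp: orb_def)
    interpret SI: second_isomorphism_grp G0 ?Gp K
      by (simp add: second_isomorphism_grp_def second_isomorphism_grp_axioms_def nG0 sgK)
    have iso: "order (?Gp\<lparr>carrier := K\<rparr> Mod (G0 \<inter> K)) = order (?Gp\<lparr>carrier := G0 <#>\<^bsub>?Gp\<^esub> K\<rparr> Mod G0)"
      using iso_same_order[OF SI.normal_intersection_quotient_isom] .
    have grpK: "group (?Gp\<lparr>carrier := K\<rparr>)" using Gp.subgroup_imp_group[OF sgK] .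
    have sgIK: "subgroup (G0 \<inter> K) (?Gp\<lparr>carrier := K\<rparr>)"
      using Gp.subgroup_incl[OF Gp.subgroups_Inter_pair[OF sgG0 sgK] sgK] by blast
    have lagK: "card (rcosets\<^bsub>?Gp\<lparr>carrier := K\<rparr>\<^esub> (G0 \<inter> K)) * card (G0 \<inter> K) = card K"
      using group.lagrange[OF grpK sgIK] by (simp add: order_def)
    have sgM: "subgroup (G0 <#>\<^bsub>?Gp\<^esub> K) ?Gp" using SI.normal_set_mult_subgroup .
    have grpM: "group (?Gp\<lparr>carrier := G0 <#>\<^bsub>?Gp\<^esub> K\<rparr>)" using Gp.subgroup_imp_group[OF sgM] .
    have sgG0M: "subgroup G0 (?Gp\<lparr>carrier := G0 <#>\<^bsub>?Gp\<^esub> K\<rparr>)"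
      using Gp.subgroup_incl[OF sgG0 sgM SI.H_contained_in_set_mult] .
    have lagM: "card (rcosets\<^bsub>?Gp\<lparr>carrier := G0 <#>\<^bsub>?Gp\<^esub> K\<rparr>\<^esub> G0) * card G0 = card (G0 <#>\<^bsub>?Gp\<^esub> K)"
      using group.lagrange[OF grpM sgG0M] by (simp add: order_def)
    have eqc: "card (rcosets\<^bsub>?Gp\<lparr>carrier := K\<rparr>\<^esub> (G0 \<inter> K)) = card (rcosets\<^bsub>?Gp\<lparr>carrier := G0 <#>\<^bsub>?Gp\<^esub> K\<rparr>\<^esub> G0)"
      using iso by (simp add: order_def FactGroup_def)
    have Msub: "card (G0 <#>\<^bsub>?Gp\<^esub> K) \<le> card G"
      using card_mono[OF finG] subgroup.subset[OF sgM] by simp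
    define c where "c = card (rcosets\<^bsub>?Gp\<lparr>carrier := K\<rparr>\<^esub> (G0 \<inter> K))"
    have "card K * card G0 = c * card (G0 \<inter> K) * card G0" using lagK c_def by simp
    also have "\<dots> = card (G0 <#>\<^bsub>?Gp\<^esub> K) * card (G0 \<inter> K)" using lagM eqc c_def by simp
    also have "\<dots> \<le> card G * card (G0 \<inter> K)" using Msub by simp
    finally have ineq: "card K * card G0 \<le> card G * card (K \<inter> G0)" by (simp add: Int_commute)
    have "card (stabiliser G \<omega>) * card G0 \<le> card K * card G0"
      by (rule mult_right_mono[OF assms(8)]) simp
    also note ineq
    finally have "card (stabiliser G \<omega>) * card G0 \<le> card G * card (K \<inter> G0)" .
    hence "card (stabiliser G \<omega>) * (card \<Omega> * card (stabiliser G0 \<omega>)) \<le> (card \<Omega> * card (stabiliser G \<omega>)) * card (K \<inter> G0)"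
      by (simp only: osG osG0)
    hence "(card \<Omega> * card (stabiliser G \<omega>)) * card (stabiliser G0 \<omega>) \<le> (card \<Omega> * card (stabiliser G \<omega>)) * card (K \<inter> G0)"
      by (simp add: algebra_simps)
    moreover have "card \<Omega> * card (stabiliser G \<omega>) > 0"
      using osG finG Gp.subgroup_self Gp.one_closed by (metis card_gt_0_iff empty_iff perm_grp_simps(1))
    ultimately have "card (stabiliser G0 \<omega>) \<le> card (K \<inter> G0)" by simp
    then show ?thesis using fix0 by simp
  qed
qed

end
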